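(* Let $n$ be a non-negative integer and $r,s\in\mathbb{C}\setminus\mathbb{Z}^{-}$ with $s\ne0$ and $r-s\notin\mathbb{Z}^{-}$. Then \[ \sum_{k=0}^{n}(-1)^{k}\frac{\binom{n}{k}}{\binom{k+r}{s}}H_k=H_n\left(\frac{s}{r-s+1}\frac{1}{\binom{n+r}{r-s+1}}-\frac{1}{\binom{r}{s}}\right)+s\sum_{k=0}^{n-1}\frac{H_{n-1-k}}{(k+s)\binom{r+k+1}{r-s+1}}. \]
   Context: $\mathbb{Z}^{-}$ denotes the set of negative integers. For complex $z$ not a negative integer, $H_z=\psi(z+1)+\gamma$; for integers $n\ge0$, $H_n=\sum_{j=1}^n1/j$. Binomial coefficients with complex entries: $\binom{x}{y}=\frac{\Gamma(x+1)}{\Gamma(y+1)\Gamma(x-y+1)}$. *)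

theory Defs
  imports "HOL-Analysis.Analysis"
begin

definition cbinom :: "complex \<Rightarrow> complex \<Rightarrow> complex" where
  "cbinom x y = Gamma (x + 1) / (Gamma (y + 1) * Gamma (x - y + 1))"

definition negInts :: "complex set" where
  "negInts = {of_int m | m. m < 0}"

end

theory Submission
  imports Defs
begin

lemma lemA:
  "of_nat (n choose j) * (harm n - harm j) = (\<Sum>k<n. of_nat (k choose j) / of_nat (n - k) :: complex)"
proof (induction n arbitrary: j)
  case 0
  then show ?case by (cases j) (auto simp: harm_def)
next
  case (Suc n)
  have shift: "(\<Sum>k<Suc n. of_nat (k choose j) / of_nat (Suc n - k) :: complex)
     = of_nat (0 choose j) / of_nat (Suc n) + (\<Sum>k<n. of_nat (Suc k choose j) / of_nat (n - k))"
    by (subst sum.lessThan_Suc_shift) simp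
  show ?case
  proof (cases j)
    case 0
    then show ?thesis using Suc.IH[of 0] shift
      by (simp add: harm_Suc harm_def field_simps)
  next
    case (Suc i)
    have e: "(\<Sum>k<n. of_nat (Suc k choose Suc i) / of_nat (n - k) :: complex)
       = (\<Sum>k<n. of_nat (k choose i) / of_nat (n - k)) + (\<Sum>k<n. of_nat (k choose Suc i) / of_nat (n - k))"
      by (simp add: sum.distrib add_divide_distrib)
    have b: "(of_nat (Suc n) :: complex) * of_nat (n choose i) = of_nat (Suc n choose Suc i) * of_nat (Suc i)"
      using Suc_times_binomial_eq[of n i] by (metis of_nat_mult)
    have c: "(of_nat (Suc n choose Suc i) :: complex) = of_nat (n choose i) + of_nat (n choose Suc i)"
      by simp
    show ?thesis
    proof -
      have d: "(of_nat (Suc n choose Suc i) :: complex) / of_nat (Suc n) = of_nat (n choose i) / of_nat (Suc i)"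
        using b by (simp add: field_simps del: of_nat_Suc binomial_Suc_Suc)
      have "of_nat (Suc n choose j) * (harm (Suc n) - harm j) =
        (of_nat (n choose i) + of_nat (n choose Suc i)) * (harm n - harm i) - of_nat (n choose Suc i) / of_nat (Suc i)
         + (of_nat (Suc n choose Suc i) / of_nat (Suc n) - of_nat (n choose i) / of_nat (Suc i) :: complex)"
        unfolding \<open>j = Suc i\<close> harm_Suc c by (simp add: field_simps; simp add: add_divide_distrib)
      also have "\<dots> = (of_nat (n choose i) + of_nat (n choose Suc i)) * (harm n - harm i) - of_nat (n choose Suc i) / of_nat (Suc i)"
        using d by simp
      also have "\<dots> = of_nat (n choose i) * (harm n - harm i) + of_nat (n choose Suc i) * (harm n - harm (Suc i))"
        by (simp add: harm_Suc field_simps)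
      also have "\<dots> = (\<Sum>k<Suc n. of_nat (k choose j) / of_nat (Suc n - k))"
        using Suc.IH[of i] Suc.IH[of "Suc i"] shift e \<open>j = Suc i\<close> by simp
      finally show ?thesis .
    qed
  qed
qed

lemma ext_choose:
  assumes "k \<le> n"
  shows "(\<Sum>j\<le>k. f j * of_nat (k choose j) :: complex) = (\<Sum>j\<le>n. f j * of_nat (k choose j))"
  using assms by (intro sum.mono_neutral_left) auto

lemma lemB:
  fixes t :: "nat \<Rightarrow> complex"
  defines "P \<equiv> \<lambda>k. \<Sum>j\<le>k. (-1)^j * t j * of_nat (k choose j)"
  shows "(\<Sum>k\<le>n. (-1)^k * t k * of_nat (n choose k) * harm k)
     = harm n * P n - (\<Sum>k<n. P k / of_nat (n - k))"
proof -
  have "(\<Sum>k<n. P k / of_nat (n - k)) = (\<Sum>k<n. \<Sum>j\<le>n. (-1)^j * t j * (of_nat (k choose j) / of_nat (n - k)))"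
  proof (rule sum.cong[OF refl])
    fix k assume "k \<in> {..<n}"
    then have "P k = (\<Sum>j\<le>n. (-1)^j * t j * of_nat (k choose j))"
      unfolding P_def by (intro ext_choose) auto
    then show "P k / of_nat (n - k) = (\<Sum>j\<le>n. (-1)^j * t j * (of_nat (k choose j) / of_nat (n - k)))"
      by (simp add: sum_divide_distrib)
  qed
  also have "\<dots> = (\<Sum>j\<le>n. (-1)^j * t j * (\<Sum>k<n. of_nat (k choose j) / of_nat (n - k)))"
    by (subst sum.swap) (simp add: sum_distrib_left)
  also have "\<dots> = (\<Sum>j\<le>n. (-1)^j * t j * (of_nat (n choose j) * (harm n - harm j)))"
    by (simp add: lemA)
  finally have 1: "(\<Sum>k<n. P k / of_nat (n - k)) = \<dots>" .
  have 2: "harm n * P n = (\<Sum>j\<le>n. (-1)^j * t j * of_nat (n choose j) * harm n)"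
    unfolding P_def by (simp add: sum_distrib_left mult_ac)
  show ?thesis unfolding 1 2 sum_subtractf[symmetric]
    by (rule sum.cong) (auto simp: algebra_simps)
qed

lemma lemC:
  fixes a b :: complex
  assumes "\<And>m. b + of_nat m \<noteq> 0"
  shows "(\<Sum>k\<le>n. (-1)^k * (pochhammer a k / pochhammer b k) * of_nat (n choose k))
     = pochhammer (b - a) n / pochhammer b n"
proof -
  have c: "\<forall>i \<in> {0..< n}. b \<noteq> - of_nat i"
    using assms by (metis add.commute add_eq_0_iff)
  have e: "(-1)^k * of_nat (n choose k) = pochhammer (- of_nat n) k / (fact k :: complex)" for k
    using gbinomial_pochhammer[of "of_nat n :: complex" k] by (simp add: binomial_gbinomial)
  have "(\<Sum>k\<le>n. (-1)^k * (pochhammer a k / pochhammer b k) * of_nat (n choose k))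
      = (\<Sum>k\<in>{0..n}. (pochhammer a k * pochhammer (- (of_nat n)) k) / (of_nat (fact k) * pochhammer b k))"
    unfolding atMost_atLeast0
  proof (rule sum.cong[OF refl])
    fix k
    have "(-1)^k * (pochhammer a k / pochhammer b k) * of_nat (n choose k)
        = pochhammer a k * ((-1)^k * of_nat (n choose k)) / pochhammer b k" by simp
    also have "\<dots> = pochhammer a k * (pochhammer (- of_nat n) k / fact k) / pochhammer b k"
      by (simp only: e)
    also have "\<dots> = (pochhammer a k * pochhammer (- (of_nat n)) k) / (of_nat (fact k) * pochhammer b k)"
      by simp
    finally show "(-1)^k * (pochhammer a k / pochhammer b k) * of_nat (n choose k) = \<dots>" .
  qed
  also have "\<dots> = pochhammer (b - a) n / pochhammer b n"
    by (rule Vandermonde_pochhammer[OF c])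
  finally show ?thesis .
qed


lemma lemD:
  fixes P :: "nat \<Rightarrow> complex"
  assumes "P 0 = 1"
  shows "(\<Sum>k<n. harm (n - 1 - k) * (P k - P (Suc k))) = harm n - (\<Sum>k<n. P k / of_nat (n - k))"
proof -
  have s1: "(\<Sum>k<n. harm (n - 1 - k) * P (Suc k)) = (\<Sum>k<Suc n. harm (n - k) * P k) - harm n * P 0"
    by (subst sum.lessThan_Suc_shift) (simp add: diff_diff_add)
  have s2: "(\<Sum>k<Suc n. harm (n - k) * P k) = (\<Sum>k<n. harm (n - k) * P k)"
    by (simp add: harm_def)
  have s3: "(\<Sum>k<n. harm (n - k) * P k) = (\<Sum>k<n. harm (n - 1 - k) * P k + P k / of_nat (n - k))"
  proof (rule sum.cong[OF refl])
    fix k assume "k \<in> {..<n}"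
    then have "n - k = Suc (n - 1 - k)" by auto
    then show "harm (n - k) * P k = harm (n - 1 - k) * P k + P k / of_nat (n - k)"
      by (simp add: harm_Suc field_simps del: of_nat_Suc)
  qed
  show ?thesis
    using s1 s2 s3 assms by (simp add: right_diff_distrib sum_subtractf sum.distrib)
qed


lemma notnp:
  assumes "x \<notin> negInts"
  shows "x + 1 \<notin> \<int>\<^sub>\<le>\<^sub>0"
proof
  assume "x + 1 \<in> \<int>\<^sub>\<le>\<^sub>0"
  then obtain m where "x + 1 = of_int m" "m \<le> 0" by (auto elim: nonpos_Ints_cases)
  then have "x = of_int (m - 1)" "m - 1 < 0" by (auto simp: algebra_simps)
  then show False using assms unfolding negInts_def by blast
qed

lemma notnp0:
  assumes "x \<notin> negInts" "x \<noteq> 0"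
  shows "x \<notin> \<int>\<^sub>\<le>\<^sub>0"
proof
  assume "x \<in> \<int>\<^sub>\<le>\<^sub>0"
  then obtain m where "x = of_int m" "m \<le> 0" by (auto elim: nonpos_Ints_cases)
  with assms have "m < 0" by (cases "m = 0") auto
  then show False using assms \<open>x = of_int m\<close> unfolding negInts_def by blast
qed

lemma Gamma_shift:
  assumes "x \<notin> \<int>\<^sub>\<le>\<^sub>0"
  shows "Gamma (x + of_nat k) = Gamma x * pochhammer x k"
  using pochhammer_Gamma[OF assms, of k] Gamma_nonzero[OF assms] by simp

lemma poch_nz:
  fixes x :: complex
  assumes "x \<notin> \<int>\<^sub>\<le>\<^sub>0"
  shows "pochhammer x k \<noteq> 0"
  using assms pochhammer_eq_0_imp_nonpos_Int by blast

theorem theorem13: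
  fixes n :: nat and r s :: complex
  assumes "r \<notin> negInts" and "s \<notin> negInts" and "s \<noteq> 0" and "r - s \<notin> negInts"
  shows "(\<Sum>k=0..n. (-1)^k * of_nat (n choose k) / cbinom (of_nat k + r) s * harm k)
    = harm n * (s / (r - s + 1) * (1 / cbinom (of_nat n + r) (r - s + 1)) - 1 / cbinom r s)
      + s * (\<Sum>k=0..<n. harm (n - 1 - k) / ((of_nat k + s) * cbinom (r + of_nat k + 1) (r - s + 1)))"
proof -
  define a where "a = r - s + 1"
  define b where "b = r + 1"
  have a: "a \<notin> \<int>\<^sub>\<le>\<^sub>0" unfolding a_def using notnp[OF assms(4)] .
  have b: "b \<notin> \<int>\<^sub>\<le>\<^sub>0" unfolding b_def using notnp[OF assms(1)] .
  have sn: "s \<notin> \<int>\<^sub>\<le>\<^sub>0" using notnp0[OF assms(2,3)] .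
  have ba: "b - a = s" unfolding a_def b_def by simp
  have bm: "b + of_nat m \<noteq> 0" for m
  proof
    assume "b + of_nat m = 0"
    then have "b = - of_nat m" by (simp add: eq_neg_iff_add_eq_0)
    then show False using b by auto
  qed
  have a0: "a \<noteq> 0" using a by auto
  have Ga: "Gamma a \<noteq> 0" and Gb: "Gamma b \<noteq> 0" and Gs: "Gamma s \<noteq> 0"
    using Gamma_nonzero a b sn by auto
  have pa: "pochhammer a k \<noteq> 0" and pb: "pochhammer b k \<noteq> 0" and ps: "pochhammer s k \<noteq> 0" for k
    using poch_nz a b sn by auto
  define C0 where "C0 = 1 / cbinom r s"
  have C0: "C0 = Gamma a * (s * Gamma s) / Gamma b"
  proof -
    have "cbinom r s = Gamma b / (Gamma (s + 1) * Gamma a)"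
      unfolding cbinom_def a_def b_def by simp
    then show ?thesis unfolding C0_def by (simp add: Gamma_plus1[OF sn])
  qed
  define t where "t k = pochhammer a k / pochhammer b k" for k
  define P where "P k = (\<Sum>j\<le>k. (-1)^j * t j * of_nat (k choose j))" for k
  have P: "P k = pochhammer s k / pochhammer b k" for k
    unfolding P_def t_def using lemC[of b a k, OF bm] ba by (simp add: mult_ac)
  have e1: "1 / cbinom (of_nat k + r) s = C0 * t k" for k
  proof -
    have "cbinom (of_nat k + r) s = Gamma (b + of_nat k) / (Gamma (s + 1) * Gamma (a + of_nat k))"
      unfolding cbinom_def a_def b_def by (simp add: algebra_simps)
    also have "\<dots> = Gamma b * pochhammer b k / (s * Gamma s * (Gamma a * pochhammer a k))"
      by (simp add: Gamma_shift a b Gamma_plus1[OF sn])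
    finally have c: "cbinom (of_nat k + r) s = \<dots>" .
    show ?thesis unfolding c C0 t_def using Ga Gb Gs pa pb ps assms(3)
      by (simp add: field_simps)
  qed
  have e2: "s / (r - s + 1) * (1 / cbinom (of_nat n + r) (r - s + 1)) = C0 * P n"
  proof -
    have "cbinom (of_nat n + r) (r - s + 1) = Gamma (b + of_nat n) / (Gamma (a + 1) * Gamma (s + of_nat n))"
      unfolding cbinom_def a_def b_def by (simp add: algebra_simps)
    also have "\<dots> = Gamma b * pochhammer b n / (a * Gamma a * (Gamma s * pochhammer s n))"
      by (simp add: Gamma_shift a b sn Gamma_plus1[OF a])
    finally have c: "cbinom (of_nat n + r) (r - s + 1) = \<dots>" .
    show ?thesis unfolding c unfolding C0 P a_def[symmetric] using Ga Gb Gs pa pb ps assms(3) a0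
      by (simp add: field_simps)
  qed
  have e3: "s * (1 / ((of_nat k + s) * cbinom (r + of_nat k + 1) (r - s + 1))) = C0 * (P k - P (Suc k))" for k
  proof -
    have sk: "of_nat k + s \<noteq> 0" using ps[of "Suc k"] by (simp add: pochhammer_rec' add.commute)
    have bk: "b + of_nat k \<noteq> 0" using bm .
    have "cbinom (r + of_nat k + 1) (r - s + 1) = Gamma (b + of_nat (Suc k)) / (Gamma (a + 1) * Gamma (s + of_nat (Suc k)))"
      unfolding cbinom_def a_def b_def by (simp add: algebra_simps)
    also have "\<dots> = Gamma b * (pochhammer b k * (b + of_nat k)) / (a * Gamma a * (Gamma s * (pochhammer s k * (s + of_nat k))))"
      by (simp only: Gamma_shift[OF a] Gamma_shift[OF b] Gamma_shift[OF sn] Gamma_plus1[OF a] pochhammer_rec' mult_ac)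
    finally have c: "cbinom (r + of_nat k + 1) (r - s + 1) = \<dots>" .
    have ab: "(b + of_nat k) - (s + of_nat k) = a" unfolding a_def b_def by simp
    have Pd: "P k - P (Suc k) = a * pochhammer s k / (pochhammer b k * (b + of_nat k))"
    proof -
      have "P k - P (Suc k) = pochhammer s k / pochhammer b k - pochhammer s k * (s + of_nat k) / (pochhammer b k * (b + of_nat k))"
        unfolding P pochhammer_rec' by (simp add: mult_ac)
      also have "\<dots> = pochhammer s k * ((b + of_nat k) - (s + of_nat k)) / (pochhammer b k * (b + of_nat k))"
        using pb[of k] bk by (simp add: divide_simps) (simp add: algebra_simps)
      finally show ?thesis unfolding ab by simp
    qed
    have sk': "s + of_nat k \<noteq> 0" using sk by (simp add: add.commute)
    have aux: "S \<noteq> 0 \<Longrightarrow> Gb' \<noteq> 0 \<Longrightarrow> Y \<noteq> 0 \<Longrightarrow> B \<noteq> 0 \<Longrightarrow>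
      s * (1 / (S * (Gb' * (Y * B) / (a * Ga' * (Gs' * (X * S)))))) = (Ga' * (s * Gs') / Gb') * (a * X / (Y * B))"
      for S Gb' Y B Ga' Gs' X :: complex
      by (simp add: field_simps)
    show ?thesis unfolding c Pd C0 add.commute[of "of_nat k" s]
      by (rule aux[OF sk' Gb pb bk])
  qed
  have L: "(\<Sum>k=0..n. (-1)^k * of_nat (n choose k) / cbinom (of_nat k + r) s * harm k)
      = C0 * (\<Sum>k\<le>n. (-1)^k * t k * of_nat (n choose k) * harm k)"
    unfolding atMost_atLeast0 sum_distrib_left
  proof (rule sum.cong[OF refl])
    fix k
    have "(-1)^k * of_nat (n choose k) / cbinom (of_nat k + r) s * harm k
       = (-1)^k * of_nat (n choose k) * (1 / cbinom (of_nat k + r) s) * harm k" by simp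
    also have "\<dots> = C0 * ((-1)^k * t k * of_nat (n choose k) * harm k)"
      unfolding e1 by (simp add: mult_ac)
    finally show "(-1)^k * of_nat (n choose k) / cbinom (of_nat k + r) s * harm k = \<dots>" .
  qed
  have R: "s * (\<Sum>k=0..<n. harm (n - 1 - k) / ((of_nat k + s) * cbinom (r + of_nat k + 1) (r - s + 1)))
      = C0 * (\<Sum>k<n. harm (n - 1 - k) * (P k - P (Suc k)))"
    unfolding atLeast0LessThan sum_distrib_left
  proof (rule sum.cong[OF refl])
    fix k
    show "s * (harm (n - 1 - k) / ((of_nat k + s) * cbinom (r + of_nat k + 1) (r - s + 1)))
        = C0 * (harm (n - 1 - k) * (P k - P (Suc k)))"
    proof -
      have "s * (harm (n - 1 - k) / ((of_nat k + s) * cbinom (r + of_nat k + 1) (r - s + 1)))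
        = (s * (1 / ((of_nat k + s) * cbinom (r + of_nat k + 1) (r - s + 1)))) * harm (n - 1 - k)"
        by simp
      also have "\<dots> = C0 * (harm (n - 1 - k) * (P k - P (Suc k)))"
        unfolding e3 by (simp add: mult_ac)
      finally show ?thesis .
    qed
  qed
  have P0: "P 0 = 1" by (simp add: P)
  show ?thesis
    unfolding L R e2 C0_def[symmetric] lemD[of P, OF P0]
    unfolding lemB[of t n, folded P_def]
    by (simp add: algebra_simps)
qed

end
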